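(* Let $\mathbb{K}$ be a field of characteristic $p>0$, let $a_1,\dots,a_k\in\mathbb{K}$, and let $\alpha_1\le\dots\le\alpha_k$ and $\beta_1,\dots,\beta_k$ be nonnegative integers with $p>\max_j(\alpha_j+\beta_j)$. Let $P=\sum_{j=1}^k a_jX^{\alpha_j}(1+X)^{\beta_j}\in\mathbb{K}[X]$. If $P\neq0$, then \[\operatorname{val}(P)\le\max_{1\le j\le k}\left(\alpha_j+\binom{k+1-j}{2}\right).\]
   Context: For a nonzero polynomial $P$, $\operatorname{val}(P)$ is the largest integer $v$ such that $X^v$ divides $P$. *)

theory Defs
  imports "HOL-Computational_Algebra.Polynomial"
begin

text \<open>Valuation of a polynomial: the largest v such that X^v divides P (meaningful for P nonzero).\<close>
definition val :: "'a::comm_semiring_1 poly \<Rightarrow> nat" where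
  "val P = (GREATEST v. monom 1 v dvd P)"

end

theory Submission
  imports Defs "Jordan_Normal_Form.Determinant" "Jordan_Normal_Form.Char_Poly"
begin

hide_const (open) Module.module.smult





definition hX :: "'a::field poly" where "hX = [:1,1:]"
definition xX :: "'a::field poly" where "xX = [:0,1:]"

lemma pderiv_hX[simp]: "pderiv hX = 1" by (simp add: hX_def pderiv_pCons)
lemma pderiv_xX[simp]: "pderiv xX = 1" by (simp add: xX_def pderiv_pCons)

definition th :: "'a::field poly \<Rightarrow> 'a poly" where
  "th q = xX * pderiv q"

definition ths :: "nat \<Rightarrow> 'a::field poly \<Rightarrow> 'a poly" where
  "ths i = th ^^ i"

lemma coeff_th: "coeff (th q) n = of_nat n * coeff q n"
  by (cases n) (auto simp: th_def xX_def coeff_pderiv)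

lemma ths_Suc: "ths (Suc i) q = th (ths i q)"
  by (simp add: ths_def)

lemma ths_0[simp]: "ths 0 q = q"
  by (simp add: ths_def)

lemma coeff_ths: "coeff (ths i q) n = of_nat n ^ i * coeff q n"
  by (induction i) (auto simp: ths_Suc coeff_th)

lemma ths_sum: "ths i (\<Sum>t\<in>T. smult (c t) (f t)) = (\<Sum>t\<in>T. smult (c t) (ths i (f t)))"
  by (rule poly_eqI) (simp add: coeff_ths coeff_sum sum_distrib_left algebra_simps)

lemma ths_diff: "ths i (p - smult c q) = ths i p - smult c (ths i q)"
  by (rule poly_eqI) (simp add: coeff_ths algebra_simps)

lemma monom_dvd_coeff: "monom 1 v dvd q \<longleftrightarrow> (\<forall>n<v. coeff q n = 0)"
  by (rule monom_1_dvd_iff')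

lemma ths_dvd: "monom 1 v dvd q \<Longrightarrow> monom 1 v dvd ths i q"
  by (simp add: monom_dvd_coeff coeff_ths)

lemma th_mult: "th (p * q) = th p * q + p * th q"
  by (simp add: th_def pderiv_mult algebra_simps)

lemma th_pow: "hX * th (hX ^ i) = smult (of_nat i) xX * hX ^ i"
proof (cases i)
  case 0 then show ?thesis by (simp add: th_def)
next
  case (Suc j)
  have "th (hX ^ i) = xX * (smult (of_nat i) ((hX::'a poly) ^ j) * 1)"
    unfolding th_def Suc pderiv_power_Suc pderiv_hX ..
  then show ?thesis by (simp add: Suc algebra_simps del: power_Suc) (simp add: algebra_simps)
qed

lemma of_nat_mult_smult: "(of_nat n :: 'a::field poly) * p = smult (of_nat n) p"
  by (simp add: of_nat_poly)

lemma th_monom: "th (monom (1::'a::field) a) = smult (of_nat a) (monom 1 a)"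
  by (rule poly_eqI) (simp add: coeff_th coeff_monom)

lemma hX_eq: "(hX::'a::field poly) = 1 + xX"
  by (simp add: hX_def xX_def one_pCons)

definition gg :: "nat \<Rightarrow> nat \<Rightarrow> 'a::field poly" where
  "gg a b = monom 1 a * hX ^ b"

lemma th_gg: "hX * th (gg a b) = gg a b * (of_nat a + smult (of_nat (a + b)) xX)"
proof -
  have "hX * th (gg a b) = hX * smult (of_nat a) (monom 1 a) * hX ^ b
       + monom 1 a * (hX * th (hX ^ b))"
    by (simp add: gg_def th_mult th_monom algebra_simps)
  also have "\<dots> = hX * smult (of_nat a) (monom 1 a) * hX ^ b
       + monom 1 a * (smult (of_nat b) xX * hX ^ b)"
    by (simp add: th_pow)
  also have "\<dots> = gg a b * (hX * of_nat a + smult (of_nat b) xX)"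
    by (simp add: gg_def algebra_simps of_nat_mult_smult)
  also have "hX * of_nat a + smult (of_nat b) xX = (of_nat a + smult (of_nat (a + b)) xX :: 'a poly)"
    by (simp add: hX_eq algebra_simps smult_add_left smult_add_right of_nat_poly smult_one)
  finally show ?thesis .
qed

fun pp :: "nat \<Rightarrow> nat \<Rightarrow> nat \<Rightarrow> 'a::field poly" where
  "pp a N 0 = 1"
| "pp a N (Suc i) = (of_nat a + smult (of_nat N - of_nat i) xX) * pp a N i + hX * th (pp a N i)"

lemma degree_th: "degree (th q) \<le> degree q"
  by (rule degree_le) (simp add: coeff_th coeff_eq_0)

lemma degree_hX: "degree (hX :: 'a::field poly) = 1" by (simp add: hX_def)
lemma degree_xX: "degree (xX :: 'a::field poly) = 1" by (simp add: xX_def)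

lemma degree_pp: "degree (pp a N i :: 'a::field poly) \<le> i"
proof (induction i)
  case 0 then show ?case by simp
next
  case (Suc i)
  have d0: "degree (of_nat a + smult (of_nat N - of_nat i) xX :: 'a poly) \<le> 1"
    by (rule order.trans[OF degree_add_le_max]) (auto simp: degree_xX of_nat_poly)
  have d1: "degree ((of_nat a + smult (of_nat N - of_nat i) xX) * pp a N i :: 'a poly) \<le> Suc i"
    by (rule order.trans[OF degree_mult_le]) (use Suc d0 in auto)
  have d2: "degree (hX * th (pp a N i) :: 'a poly) \<le> Suc i"
  proof -
    have "degree (th (pp a N i :: 'a poly)) \<le> i" using Suc degree_th[of "pp a N i :: 'a poly"] by (meson order.trans)
    then show ?thesis by (intro order.trans[OF degree_mult_le]) (simp add: degree_hX)
  qed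
  show ?case by simp (rule order.trans[OF degree_add_le_max], use d1 d2 in auto)
qed

lemma ths_gg: "hX ^ i * ths i (gg a b) = gg a b * (pp a (a + b) i :: 'a::field poly)"
proof (induction i)
  case 0 then show ?case by simp
next
  case (Suc i)
  define F where "F = ths i (gg a b :: 'a poly)"
  define H where "H = (hX::'a poly)"
  define g where "g = (gg a b :: 'a poly)"
  define q where "q = (pp a (a+b) i :: 'a poly)"
  have IH: "H ^ i * F = g * q" using Suc by (simp add: F_def H_def g_def q_def)
  have e1: "H * th (H ^ i * F) = smult (of_nat i) xX * H ^ i * F + H ^ Suc i * th F"
  proof -
    have "H * th (H ^ i * F) = (H * th (H ^ i)) * F + H ^ Suc i * th F"
      by (simp add: th_mult algebra_simps)
    also have "H * th (H ^ i) = smult (of_nat i) xX * H ^ i" unfolding H_def by (rule th_pow)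
    finally show ?thesis by simp
  qed
  have e2: "H * th (g * q) = g * (of_nat a + smult (of_nat (a + b)) xX) * q + g * (H * th q)"
  proof -
    have "H * th (g * q) = (H * th g) * q + g * (H * th q)"
      by (simp add: th_mult algebra_simps)
    also have "H * th g = g * (of_nat a + smult (of_nat (a + b)) xX)"
      unfolding H_def g_def by (rule th_gg)
    finally show ?thesis by simp
  qed
  have "H ^ Suc i * th F = H * th (H ^ i * F) - smult (of_nat i) xX * H ^ i * F"
    using e1 by (metis add_diff_cancel_left')
  also have "\<dots> = H * th (g * q) - smult (of_nat i) xX * (g * q)"
    using IH by (simp only: mult.assoc)
  also have "\<dots> = g * (of_nat a + smult (of_nat (a + b)) xX) * q + g * (H * th q)
        - smult (of_nat i) xX * (g * q)"
    using e2 by (simp only:)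
  also have "\<dots> = g * ((of_nat a + smult (of_nat (a+b) - of_nat i) xX) * q + H * th q)"
    by (simp add: algebra_simps smult_diff_left)
  finally show ?case by (simp add: F_def H_def g_def q_def ths_Suc)
qed






lemma det_scale:
  fixes A :: "'a::comm_ring_1 mat"
  assumes A: "A \<in> carrier_mat n n"
  shows "det (mat n n (\<lambda>(i,j). r i * c j * A $$ (i,j))) = prod r {0..<n} * prod c {0..<n} * det A"
proof -
  have B: "mat n n (\<lambda>(i,j). r i * c j * A $$ (i,j)) \<in> carrier_mat n n" by simp
  have "det (mat n n (\<lambda>(i,j). r i * c j * A $$ (i,j)))
     = (\<Sum>p\<in>{p. p permutes {0..<n}}. signof p * (\<Prod>i = 0..<n. r i * c (p i) * A $$ (i, p i)))"
    unfolding det_def'[OF B] by (intro sum.cong refl arg_cong2[where f="(*)"] prod.cong) auto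
  also have "\<dots> = (\<Sum>p\<in>{p. p permutes {0..<n}}. prod r {0..<n} * prod c {0..<n} * (signof p * (\<Prod>i = 0..<n. A $$ (i, p i))))"
  proof (intro sum.cong refl)
    fix p assume p: "p \<in> {p. p permutes {0..<n}}"
    have "(\<Prod>i = 0..<n. c (p i)) = prod c {0..<n}"
      using prod.permute[of p "{0..<n}" c] p by (simp add: comp_def)
    then show "signof p * (\<Prod>i = 0..<n. r i * c (p i) * A $$ (i, p i)) =
      prod r {0..<n} * prod c {0..<n} * (signof p * (\<Prod>i = 0..<n. A $$ (i, p i)))"
      by (simp add: prod.distrib algebra_simps)
  qed
  also have "\<dots> = prod r {0..<n} * prod c {0..<n} * det A"
    unfolding det_def'[OF A] by (simp add: sum_distrib_left)
  finally show ?thesis .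
qed

lemma det_col_comb:
  fixes A :: "'a::comm_ring_1 mat"
  assumes A: "A \<in> carrier_mat n n" and k: "k < n"
  shows "det (mat n n (\<lambda>(i,j). if j = k then (\<Sum>l\<in>{0..<n}. c l * A $$ (i,l)) else A $$ (i,j))) = c k * det A"
proof -
  define B where "B T = mat n n (\<lambda>(i,j). if j = k then c k * A $$ (i,k) + (\<Sum>l\<in>T. c l * A $$ (i,l)) else A $$ (i,j))" for T
  have Bc: "B T \<in> carrier_mat n n" for T by (simp add: B_def)
  have main: "T \<subseteq> {0..<n} - {k} \<Longrightarrow> det (B T) = c k * det A" for T
  proof (induction T rule: infinite_finite_induct)
    case (infinite T)
    then have "finite T" using finite_subset by blast
    with infinite show ?case by simp
  next
    case empty
    have "B {} = multcol k (c k) A"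
      by (rule eq_matI) (use A in \<open>auto simp: B_def\<close>)
    also have "\<dots> = A * multrow_mat n k (c k)" by (rule multcol_mat[OF A])
    also have "det \<dots> = det A * c k"
      by (subst det_mult[OF A]) (auto simp: det_multrow_mat[OF k])
    finally show ?case by simp
  next
    case (insert l T)
    have l: "l < n" "l \<noteq> k" using insert by auto
    have "B (insert l T) = addcol (c l) k l (B T)"
      by (rule eq_matI) (use A l insert in \<open>auto simp: B_def algebra_simps\<close>)
    then have "det (B (insert l T)) = det (B T)" using det_addcol[OF l(1) l(2)[symmetric] Bc] by simp
    with insert show ?case by simp
  qed
  have "mat n n (\<lambda>(i,j). if j = k then (\<Sum>l\<in>{0..<n}. c l * A $$ (i,l)) else A $$ (i,j)) = B ({0..<n} - {k})"
    unfolding B_def by (rule eq_matI) (use k in \<open>auto simp: sum.remove[of "{0..<n}" k]\<close>)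
  with main show ?thesis by simp
qed

lemma degree_det_rows:
  fixes A :: "'a::comm_ring_1 poly mat"
  assumes A: "A \<in> carrier_mat n n"
    and d: "\<And>i j. i < n \<Longrightarrow> j < n \<Longrightarrow> degree (A $$ (i,j)) \<le> d i"
  shows "degree (det A) \<le> sum d {0..<n}"
proof -
  {
    fix p
    assume p: "p permutes {0..<n}"
    have "(\<Sum>x = 0..<n. degree (A $$ (x, p x))) \<le> (\<Sum>x = 0..<n. d x)"
      by (rule sum_mono[OF d], insert p, auto)
  } note * = this
  show ?thesis unfolding det_def'[OF A]
    apply (rule degree_sum_le)
     apply (simp_all add: finite_permutations)
    apply (drule *)
    apply (rule order.trans [OF degree_prod_sum_le])
     apply simp_all
    done
qed

lemma vandermonde_nz:
  fixes x :: "nat \<Rightarrow> 'a::field"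
  assumes inj: "inj_on x {0..<n}"
  shows "det (mat n n (\<lambda>(i,j). x j ^ i)) \<noteq> 0"
proof
  define V where "V = mat n n (\<lambda>(i,j). x j ^ i)"
  assume "det (mat n n (\<lambda>(i,j). x j ^ i)) = 0"
  then have "det (transpose_mat V) = 0" unfolding V_def by (subst det_transpose) auto
  then obtain y where y: "y \<in> carrier_vec n" "y \<noteq> 0\<^sub>v n" "transpose_mat V *\<^sub>v y = 0\<^sub>v n"
    using det_0_iff_vec_prod_zero_field[of "transpose_mat V" n] unfolding V_def by auto
  define q where "q = (\<Sum>i<n. monom (y $ i) i)"
  have cq: "coeff q t = (if t < n then y $ t else 0)" for t
    unfolding q_def coeff_sum coeff_monom by (auto simp: sum.delta)
  have root: "poly q (x j) = 0" if j: "j < n" for j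
  proof -
    have "(transpose_mat V *\<^sub>v y) $ j = 0" using y(3) j by simp
    then have "(\<Sum>i = 0..<n. x j ^ i * y $ i) = 0"
      using j y(1) by (simp add: V_def mult_mat_vec_def scalar_prod_def)
    moreover have "poly q (x j) = (\<Sum>i<n. y $ i * x j ^ i)"
      unfolding q_def by (simp add: poly_sum poly_monom)
    ultimately show ?thesis by (simp add: atLeast0LessThan algebra_simps)
  qed
  have n: "n > 0" using y(1,2) by (cases n) auto
  have "degree q < n"
  proof -
    have "degree q \<le> n - 1" by (rule degree_le) (use n in \<open>auto simp: cq\<close>)
    then show ?thesis using n by simp
  qed
  have cardA: "card (x ` {0..<n}) = n" using inj by (simp add: card_image)
  have "q = 0"
    by (rule poly_eqI_degree[of "x ` {0..<n}"]) (use root cardA \<open>degree q < n\<close> n in auto)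
  then have "y $ t = 0" if "t < n" for t using cq[of t] that by simp
  then have "y = 0\<^sub>v n" using y(1) by (intro eq_vecI) auto
  with y(2) show False by simp
qed






definition WM :: "(nat \<Rightarrow> 'a::field poly) \<Rightarrow> nat \<Rightarrow> 'a poly mat" where
  "WM f m = mat m m (\<lambda>(i,j). ths i (f j))"

lemma WM_carrier[simp]: "WM f m \<in> carrier_mat m m" by (simp add: WM_def)
lemma dim_WM[simp]: "dim_row (WM f m) = m" "dim_col (WM f m) = m" by (auto simp: WM_def)
lemma WM_index[simp]: "i < m \<Longrightarrow> j < m \<Longrightarrow> WM f m $$ (i,j) = ths i (f j)" by (simp add: WM_def)

lemma monom1_xX: "monom 1 k = (xX::'a::field poly) ^ k"
  by (simp add: monom_altdef xX_def)

lemma order0_xpow: "order 0 ((xX::'a::field poly) ^ k) = k"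
  using order_power_n_n[of "0::'a" k] by (simp add: xX_def)

lemma poly_hX[simp]: "poly hX x = 1 + (x::'a::field)"
  unfolding hX_def by simp

lemma poly_hX0: "poly (hX ^ k) 0 = (1::'a::field)"
  unfolding hX_def by (induct k) auto

lemma order0_hpow: "q \<noteq> 0 \<Longrightarrow> order 0 ((hX::'a::field poly) ^ k * q) = order 0 q"
proof -
  assume q: "q \<noteq> 0"
  have h: "(hX::'a poly) ^ k \<noteq> 0" using poly_hX0[of k] by (metis poly_0 zero_neq_one)
  have "order 0 ((hX::'a poly) ^ k) = 0" by (rule order_0I) (simp add: poly_hX0)
  then show ?thesis using order_mult[of "hX ^ k" q 0] h q by simp
qed

lemma coeff_below_order: "n < order 0 p \<Longrightarrow> coeff p n = 0"
proof (cases "p = 0")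
  case False
  assume n: "n < order 0 p"
  have "monom 1 (order 0 p) dvd p" using monom_1_dvd_iff[OF False] by simp
  then show ?thesis using n by (simp add: monom_dvd_coeff)
qed simp

lemma coeff_at_order: "p \<noteq> 0 \<Longrightarrow> coeff p (order 0 p) \<noteq> 0"
proof
  assume p: "p \<noteq> 0" and c: "coeff p (order 0 p) = 0"
  have "\<forall>n<Suc (order 0 p). coeff p n = 0"
    using c coeff_below_order[of _ p] less_Suc_eq by auto
  then have "monom 1 (Suc (order 0 p)) dvd p" by (simp add: monom_dvd_coeff)
  then show False using monom_1_dvd_iff[OF p] by simp
qed

lemma of_nat_inj_CHAR:
  assumes "a < CHAR('a::field)" "b < CHAR('a)" "of_nat a = (of_nat b :: 'a)"
  shows "a = b"
proof (rule ccontr)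
  assume ne: "a \<noteq> b"
  { fix x y :: nat assume xy: "x < y" "y < CHAR('a)" "of_nat x = (of_nat y :: 'a)"
    have "of_nat (y - x) = (of_nat y - of_nat x :: 'a)" using xy by (simp add: of_nat_diff)
    then have "of_nat (y - x) = (0::'a)" using xy by simp
    then have "CHAR('a) dvd (y - x)" by (simp add: of_nat_eq_0_iff_char_dvd)
    then have False using xy by (metis diff_is_0_eq dvd_imp_le leD less_imp_diff_less zero_less_diff)
  }
  with assms ne show False by (metis linorder_neqE_nat)
qed

lemma det_distinct_val_nz:
  fixes h :: "nat \<Rightarrow> 'a::field poly"
  assumes nz: "\<And>j. j < m \<Longrightarrow> h j \<noteq> 0"
    and deg: "\<And>j. j < m \<Longrightarrow> degree (h j) < CHAR('a)"
    and dist: "inj_on (\<lambda>j. order 0 (h j)) {0..<m}"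
  shows "det (WM h m) \<noteq> 0"
proof -
  define v where "v j = order 0 (h j)" for j
  have dv: "monom 1 (v j) dvd ths i (h j)" if "j < m" for i j
  proof -
    have "monom 1 (v j) dvd h j" using monom_1_dvd_iff[OF nz[OF that]] by (simp add: v_def)
    then show ?thesis by (rule ths_dvd)
  qed
  define Q where "Q = mat m m (\<lambda>(i,j). ths i (h j) div monom 1 (v j))"
  have Qc: "Q \<in> carrier_mat m m" by (simp add: Q_def)
  have "WM h m = mat m m (\<lambda>(i,j). 1 * monom 1 (v j) * Q $$ (i,j))"
    by (rule eq_matI) (auto simp: Q_def dv dvd_div_mult_self mult.commute)
  then have dWM: "det (WM h m) = (\<Prod>j = 0..<m. monom 1 (v j)) * det Q"
    using det_scale[OF Qc, of "\<lambda>_. 1" "\<lambda>j. monom 1 (v j)"] by simp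
  define c where "c j = coeff (h j) (v j)" for j
  have cnz: "c j \<noteq> 0" if "j < m" for j using coeff_at_order[OF nz[OF that]] by (simp add: c_def v_def)
  have Q0: "poly (Q $$ (i,j)) 0 = 1 * c j * (of_nat (v j)) ^ i" if ij: "i < m" "j < m" for i j
  proof -
    obtain r where r: "ths i (h j) = monom 1 (v j) * r" using dv[OF ij(2)] by (auto elim: dvdE)
    have "Q $$ (i,j) = r" using ij by (simp add: Q_def r)
    moreover have "coeff r 0 = coeff (ths i (h j)) (v j)" by (simp add: r coeff_monom_mult)
    ultimately show ?thesis by (simp add: poly_0_coeff_0 coeff_ths c_def)
  qed
  define V where "V = mat m m (\<lambda>(i,j). (of_nat (v j) :: 'a) ^ i)"
  have Vc: "V \<in> carrier_mat m m" by (simp add: V_def)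
  have "poly (det Q) 0 = det (mat m m (\<lambda>(i,j). 1 * c j * V $$ (i,j)))"
    by (rule poly_det_cong) (auto simp: Qc Q0 V_def)
  also have "\<dots> = (\<Prod>j = 0..<m. c j) * det V"
    using det_scale[OF Vc, of "\<lambda>_. 1" c] by simp
  also have "\<dots> \<noteq> 0"
  proof -
    have "(\<Prod>j = 0..<m. c j) \<noteq> 0" using cnz by (simp add: prod_zero_iff)
    moreover have "det V \<noteq> 0" unfolding V_def
    proof (rule vandermonde_nz, rule inj_onI)
      fix x y assume xy: "x \<in> {0..<m}" "y \<in> {0..<m}" "(of_nat (v x) :: 'a) = of_nat (v y)"
      have "v x < CHAR('a)" "v y < CHAR('a)"
        using order_degree[OF nz, of x 0] order_degree[OF nz, of y 0] deg[of x] deg[of y] xy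
        by (auto simp: v_def)
      then have "v x = v y" using of_nat_inj_CHAR xy(3) by blast
      then show "x = y" using dist xy unfolding v_def inj_on_def by blast
    qed
    ultimately show ?thesis by simp
  qed
  finally have "det Q \<noteq> 0" by auto
  moreover have "(\<Prod>j = 0..<m. monom 1 (v j)) \<noteq> (0 :: 'a poly)" by (simp add: prod_zero_iff)
  ultimately show ?thesis using dWM by simp
qed






definition indep :: "(nat \<Rightarrow> 'a::field poly) \<Rightarrow> nat \<Rightarrow> bool" where
  "indep f m \<longleftrightarrow> (\<forall>c. (\<Sum>j\<in>{0..<m}. smult (c j) (f j)) = 0 \<longrightarrow> (\<forall>j<m. c j = 0))"

lemma indep_nz: "indep f m \<Longrightarrow> j < m \<Longrightarrow> f j \<noteq> 0"
proof
  assume ind: "indep f m" and j: "j < m" and f: "f j = 0"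
  let ?c = "\<lambda>i. if i = j then (1::'a) else 0"
  have "(\<Sum>i\<in>{0..<m}. smult (?c i) (f i)) = 0"
    by (intro sum.neutral) (auto simp: f)
  moreover from ind have "(\<Sum>i\<in>{0..<m}. smult (?c i) (f i)) = 0 \<longrightarrow> (\<forall>i<m. ?c i = 0)"
    unfolding indep_def by (rule spec)
  ultimately have "?c j = 0" using j by blast
  then show False by simp
qed

lemma sum_upd_split:
  fixes f :: "nat \<Rightarrow> 'a::field poly"
  assumes t: "t < m"
  shows "(\<Sum>j\<in>{0..<m}. smult (d j) ((f(t := f t - smult c (f s))) j))
       = (\<Sum>j\<in>{0..<m}. smult (d j) (f j)) - smult (d t * c) (f s)"
proof -
  have "(\<Sum>j\<in>{0..<m}. smult (d j) ((f(t := f t - smult c (f s))) j))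
      = (\<Sum>j\<in>{0..<m}. smult (d j) (f j) - (if j = t then smult (d t * c) (f s) else 0))"
    by (intro sum.cong refl) (auto simp: smult_diff_right)
  also have "\<dots> = (\<Sum>j\<in>{0..<m}. smult (d j) (f j)) - smult (d t * c) (f s)"
    using t by (simp add: sum_subtractf)
  finally show ?thesis .
qed

lemma indep_upd:
  assumes ind: "indep f m" and s: "s < m" and t: "t < m" and st: "s \<noteq> t"
  shows "indep (f(t := f t - smult c (f s))) m"
  unfolding indep_def
proof (rule allI, rule impI)
  fix d assume d0: "(\<Sum>j\<in>{0..<m}. smult (d j) ((f(t := f t - smult c (f s))) j)) = 0"
  define d' where "d' = d(s := d s - d t * c)"
  have "(\<Sum>j\<in>{0..<m}. smult (d' j) (f j))
      = (\<Sum>j\<in>{0..<m}. smult (d j) (f j) - (if j = s then smult (d t * c) (f s) else 0))"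
    by (intro sum.cong refl) (auto simp: d'_def smult_diff_left)
  also have "\<dots> = (\<Sum>j\<in>{0..<m}. smult (d j) (f j)) - smult (d t * c) (f s)"
    using s by (simp add: sum_subtractf)
  also have "\<dots> = 0" using d0 sum_upd_split[OF t, of d f c s] by simp
  finally have "\<forall>j<m. d' j = 0" using ind unfolding indep_def by blast
  then have dj: "j < m \<Longrightarrow> j \<noteq> s \<Longrightarrow> d j = 0" for j by (auto simp: d'_def)
  have "d t = 0" using dj t st by auto
  moreover have "d' s = 0" using \<open>\<forall>j<m. d' j = 0\<close> s by auto
  ultimately have "d s = 0" by (simp add: d'_def)
  with dj show "\<forall>j<m. d j = 0" by auto
qed

lemma indep_det_nz:
  fixes f :: "nat \<Rightarrow> 'a::field poly"
  assumes deg: "\<And>j. j < m \<Longrightarrow> degree (f j) < CHAR('a)"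
    and ind: "indep f m"
  shows "det (WM f m) \<noteq> 0"
  using deg ind
proof (induction "\<Sum>j\<in>{0..<m}. CHAR('a) - order 0 (f j)" arbitrary: f rule: less_induct)
  case less
  have nz: "j < m \<Longrightarrow> f j \<noteq> 0" for j using indep_nz[OF less.prems(2)] by blast
  show ?case
  proof (cases "inj_on (\<lambda>j. order 0 (f j)) {0..<m}")
    case True
    then show ?thesis using det_distinct_val_nz[of m f] nz less.prems(1) by blast
  next
    case False
    then obtain s t where st: "s < m" "t < m" "s \<noteq> t" "order 0 (f s) = order 0 (f t)"
      unfolding inj_on_def by auto
    define v where "v = order 0 (f t)"
    define c where "c = coeff (f t) v / coeff (f s) v"
    define f' where "f' = f(t := f t - smult c (f s))"
    have cs: "coeff (f s) v \<noteq> 0" using coeff_at_order[OF nz[OF st(1)]] st(4) by (simp add: v_def)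
    have WMeq: "WM f' m = addcol (- [:c:]) t s (WM f m)"
      by (rule eq_matI) (use st(1) in \<open>auto simp: f'_def ths_diff\<close>)
    have detq: "det (WM f' m) = det (WM f m)"
      unfolding WMeq by (rule det_addcol[OF st(1) st(3)[symmetric]]) simp
    have ind': "indep f' m" unfolding f'_def by (rule indep_upd[OF less.prems(2) st(1) st(2) st(3)])
    have deg': "degree (f' j) < CHAR('a)" if "j < m" for j
    proof (cases "j = t")
      case True
      have "degree (f t - smult c (f s)) \<le> max (degree (f t)) (degree (smult c (f s)))"
        by (rule degree_diff_le_max)
      also have "\<dots> < CHAR('a)" using less.prems(1)[OF st(1)] less.prems(1)[OF st(2)] degree_smult_le[of c "f s"]
        by auto
      finally show ?thesis by (simp add: f'_def True)
    qed (use less.prems(1) that in \<open>auto simp: f'_def\<close>)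
    have nz': "f' t \<noteq> 0" using indep_nz[OF ind' st(2)] .
    have "\<forall>n<Suc v. coeff (f' t) n = 0"
    proof (intro allI impI)
      fix n assume n: "n < Suc v"
      show "coeff (f' t) n = 0"
      proof (cases "n = v")
        case True then show ?thesis using cs by (simp add: f'_def c_def)
      next
        case False
        then have "n < v" using n by simp
        then show ?thesis using coeff_below_order[of n "f t"] coeff_below_order[of n "f s"] st(4)
          by (simp add: f'_def v_def)
      qed
    qed
    then have "monom 1 (Suc v) dvd f' t" by (simp add: monom_dvd_coeff)
    then have ov: "Suc v \<le> order 0 (f' t)" using monom_1_dvd_iff[OF nz'] by simp
    have oc: "order 0 (f' t) < CHAR('a)" using order_degree[OF nz', of 0] deg'[OF st(2)] by simp
    have "(\<Sum>j\<in>{0..<m}. CHAR('a) - order 0 (f' j)) < (\<Sum>j\<in>{0..<m}. CHAR('a) - order 0 (f j))"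
    proof -
      have A: "(\<Sum>j\<in>{0..<m}. CHAR('a) - order 0 (f' j)) = (CHAR('a) - order 0 (f' t)) + (\<Sum>j\<in>{0..<m} - {t}. CHAR('a) - order 0 (f' j))"
        using st(2) by (simp add: sum.remove)
      have B: "(\<Sum>j\<in>{0..<m}. CHAR('a) - order 0 (f j)) = (CHAR('a) - order 0 (f t)) + (\<Sum>j\<in>{0..<m} - {t}. CHAR('a) - order 0 (f j))"
        using st(2) by (simp add: sum.remove)
      have C: "(\<Sum>j\<in>{0..<m} - {t}. CHAR('a) - order 0 (f' j)) = (\<Sum>j\<in>{0..<m} - {t}. CHAR('a) - order 0 (f j))"
        by (intro sum.cong refl) (auto simp: f'_def)
      show ?thesis unfolding A B C using ov oc by (simp add: v_def)
    qed
    then have "det (WM f' m) \<noteq> 0" using less.hyps deg' ind' by blast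
    then show ?thesis using detq by simp
  qed
qed






lemma hX_nz[simp]: "(hX::'a::field poly) \<noteq> 0" by (simp add: hX_def)

lemma gg_alt: "gg a b = (xX::'a::field poly) ^ a * hX ^ b"
  by (simp add: gg_def monom1_xX)

lemma upper_bound:
  fixes A B :: "nat \<Rightarrow> nat"
  defines "g \<equiv> (\<lambda>j. gg (A j) (B j) :: 'a::field poly)"
  assumes nz: "det (WM g m) \<noteq> 0"
    and dv: "monom 1 n dvd det (WM g m)"
  shows "n \<le> (\<Sum>j\<in>{0..<m}. A j) + (\<Sum>i\<in>{0..<m}. i)"
proof -
  define PP where "PP = mat m m (\<lambda>(i,j). pp (A j) (A j + B j) i :: 'a poly)"
  have PPc: "PP \<in> carrier_mat m m" by (simp add: PP_def)
  have "det (mat m m (\<lambda>(i,j). hX ^ i * 1 * WM g m $$ (i,j))) = (\<Prod>i = 0..<m. hX ^ i) * det (WM g m)"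
    using det_scale[OF WM_carrier[of g m], where r="\<lambda>i. hX ^ i" and c="\<lambda>_. 1"] by simp
  moreover have "mat m m (\<lambda>(i,j). hX ^ i * 1 * WM g m $$ (i,j)) = mat m m (\<lambda>(i,j). 1 * g j * PP $$ (i,j))"
    by (rule eq_matI) (auto simp: PP_def g_def ths_gg)
  moreover have "det (mat m m (\<lambda>(i,j). 1 * g j * PP $$ (i,j))) = (\<Prod>j = 0..<m. g j) * det PP"
    using det_scale[OF PPc, of "\<lambda>_. 1" g] by simp
  ultimately have eq: "(\<Prod>i = 0..<m. hX ^ i) * det (WM g m) = (\<Prod>j = 0..<m. g j) * det PP" by simp
  have prodh: "(\<Prod>i = 0..<m. (hX::'a poly) ^ i) = hX ^ (\<Sum>i = 0..<m. i)" by (simp add: power_sum)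
  have prodg: "(\<Prod>j = 0..<m. g j) = xX ^ (\<Sum>j = 0..<m. A j) * hX ^ (\<Sum>j = 0..<m. B j)"
    by (simp add: g_def gg_alt prod.distrib power_sum)
  have PPnz: "det PP \<noteq> 0" using eq nz by (auto simp: prodh prodg poly_hX0)
  have "n \<le> order 0 (det (WM g m))" using monom_1_dvd_iff[OF nz] dv by simp
  also have "order 0 (det (WM g m)) = order 0 ((\<Prod>i = 0..<m. hX ^ i) * det (WM g m))"
    unfolding prodh by (rule order0_hpow[symmetric, OF nz])
  also have "\<dots> = order 0 (xX ^ (\<Sum>j = 0..<m. A j) * (hX ^ (\<Sum>j = 0..<m. B j) * det PP))"
    unfolding eq prodg by (simp add: mult.assoc)
  also have "\<dots> = (\<Sum>j = 0..<m. A j) + order 0 (det PP)"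
  proof -
    have x: "(xX::'a poly) ^ (\<Sum>j = 0..<m. A j) \<noteq> 0" by (simp add: xX_def)
    have "hX ^ (\<Sum>j = 0..<m. B j) * det PP \<noteq> 0"
      using PPnz poly_hX0[of "\<Sum>j = 0..<m. B j", where 'a='a] by (metis mult_eq_0_iff poly_0 zero_neq_one)
    then show ?thesis using order_mult[of "xX ^ (\<Sum>j = 0..<m. A j)" "hX ^ (\<Sum>j = 0..<m. B j) * det PP" 0] x
      by (simp add: order0_xpow order0_hpow PPnz)
  qed
  also have "order 0 (det PP) \<le> degree (det PP)" by (rule order_degree[OF PPnz])
  also have "degree (det PP) \<le> (\<Sum>i = 0..<m. i)"
    by (rule degree_det_rows[OF PPc]) (simp add: PP_def degree_pp)
  finally show ?thesis by simp
qed

lemma coreA: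
  fixes A B :: "nat \<Rightarrow> nat" and a :: "nat \<Rightarrow> 'a::field"
  defines "g \<equiv> (\<lambda>j. gg (A j) (B j) :: 'a poly)"
  assumes deg: "\<And>j. j < m \<Longrightarrow> A j + B j < CHAR('a)"
    and ind: "indep g m" and t0: "t0 < m" and at0: "a t0 \<noteq> 0"
    and dv: "monom 1 n dvd (\<Sum>j\<in>{0..<m}. smult (a j) (g j))"
  shows "n \<le> A t0 + (\<Sum>i\<in>{0..<m}. i)"
proof -
  define P where "P = (\<Sum>j\<in>{0..<m}. smult (a j) (g j))"
  define G where "G = g(t0 := P)"
  have degg: "degree (g j) < CHAR('a)" if "j < m" for j
  proof -
    have "degree (g j) \<le> degree (monom (1::'a) (A j)) + degree ((hX::'a poly) ^ B j)"
      unfolding g_def gg_def by (rule degree_mult_le)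
    also have "\<dots> \<le> A j + B j"
      using degree_power_le[of "hX::'a poly" "B j"] by (simp add: degree_monom_eq degree_hX)
    finally show ?thesis using deg[OF that] by simp
  qed
  have WMnz: "det (WM g m) \<noteq> 0" by (rule indep_det_nz[OF degg ind])
  have WMG: "WM G m = mat m m (\<lambda>(i,j). if j = t0 then (\<Sum>l\<in>{0..<m}. [:a l:] * WM g m $$ (i,l)) else WM g m $$ (i,j))"
    by (rule eq_matI) (auto simp: G_def P_def ths_sum intro!: sum.cong)
  have d1: "det (WM G m) = [:a t0:] * det (WM g m)"
    unfolding WMG by (rule det_col_comb[OF WM_carrier t0])
  define w where "w j = (if j = t0 then n else A j)" for j
  have dvw: "monom 1 (w j) dvd ths i (G j)" if "j < m" for i j
  proof (cases "j = t0")
    case True then show ?thesis using dv by (simp add: w_def G_def P_def ths_dvd)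
  next
    case False
    have "monom 1 (A j) dvd g j" by (simp add: g_def gg_def)
    then show ?thesis using False by (simp add: w_def G_def ths_dvd)
  qed
  define Q where "Q = mat m m (\<lambda>(i,j). ths i (G j) div monom 1 (w j))"
  have Qc: "Q \<in> carrier_mat m m" by (simp add: Q_def)
  have "WM G m = mat m m (\<lambda>(i,j). 1 * monom 1 (w j) * Q $$ (i,j))"
    by (rule eq_matI) (auto simp: Q_def dvw dvd_div_mult_self mult.commute)
  then have "det (WM G m) = (\<Prod>j = 0..<m. monom 1 (w j)) * det Q"
    using det_scale[OF Qc, of "\<lambda>_. 1" "\<lambda>j. monom 1 (w j)"] by simp
  also have "(\<Prod>j = 0..<m. monom 1 (w j)) = (monom 1 (\<Sum>j = 0..<m. w j) :: 'a poly)"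
    by (simp add: monom1_xX power_sum)
  finally have "monom 1 (\<Sum>j = 0..<m. w j) dvd [:a t0:] * det (WM g m)" using d1 by (metis dvd_triv_left)
  then have "monom 1 (\<Sum>j = 0..<m. w j) dvd smult (a t0) (det (WM g m))" by simp
  then have "monom 1 (\<Sum>j = 0..<m. w j) dvd det (WM g m)" using at0 by (simp add: dvd_smult_iff)
  then have le: "(\<Sum>j = 0..<m. w j) \<le> (\<Sum>j\<in>{0..<m}. A j) + (\<Sum>i\<in>{0..<m}. i)"
    using upper_bound[of A B m] WMnz unfolding g_def by blast
  have "(\<Sum>j = 0..<m. w j) = n + (\<Sum>j\<in>{0..<m} - {t0}. A j)"
    using t0 by (simp add: sum.remove w_def)
  moreover have "(\<Sum>j = 0..<m. A j) = A t0 + (\<Sum>j\<in>{0..<m} - {t0}. A j)"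
    using t0 by (simp add: sum.remove)
  ultimately show ?thesis using le by simp
qed






lemma sum_id_choose2: "(\<Sum>i\<in>{0..<m}. i) = m choose 2"
proof (induction m)
  case 0 then show ?case by simp
next
  case (Suc m)
  have "(Suc m choose 2) = (m choose 1) + (m choose 2)" by (simp add: numeral_2_eq_2)
  then show ?case using Suc by simp
qed

lemma choose2_mono: "a \<le> b \<Longrightarrow> a choose 2 \<le> b choose 2"
  unfolding choose_two by (intro div_le_mono mult_le_mono) auto

lemma solve_out:
  fixes G :: "nat \<Rightarrow> 'a::field poly"
  assumes T: "finite T" and j: "j \<in> T" and dj: "d j \<noteq> 0"
    and z: "(\<Sum>i\<in>T. smult (d i) (G i)) = 0"
  shows "G j = (\<Sum>i\<in>T - {j}. smult (- d i / d j) (G i))"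
proof -
  have "smult (d j) (G j) + (\<Sum>i\<in>T - {j}. smult (d i) (G i)) = 0"
    using z T j by (simp add: sum.remove)
  then have "smult (d j) (G j) = - (\<Sum>i\<in>T - {j}. smult (d i) (G i))"
    by (simp add: eq_neg_iff_add_eq_0)
  then have "G j = smult (inverse (d j)) (- (\<Sum>i\<in>T - {j}. smult (d i) (G i)))"
    using dj by (metis smult_smult left_inverse smult_1_left)
  also have "\<dots> = (\<Sum>i\<in>T - {j}. smult (- d i / d j) (G i))"
    by (simp add: smult_sum2 smult_minus_right sum_negf divide_inverse mult.commute
        flip: sum_negf)
  finally show ?thesis .
qed

lemma lemmaA:
  fixes \<alpha> \<beta> :: "nat \<Rightarrow> nat" and a :: "nat \<Rightarrow> 'a::field"
  defines "G \<equiv> (\<lambda>j. gg (\<alpha> j) (\<beta> j) :: 'a poly)"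
  assumes "finite S" "i0 \<in> S" "\<And>j. j \<in> S \<Longrightarrow> \<alpha> j + \<beta> j < CHAR('a)"
    "\<not> (\<exists>c. G i0 = (\<Sum>j\<in>S - {i0}. smult (c j) (G j)))"
    "a i0 \<noteq> 0" "monom 1 n dvd (\<Sum>j\<in>S. smult (a j) (G j))"
  shows "n \<le> \<alpha> i0 + (card S choose 2)"
  using assms(2-)
proof (induction "card S" arbitrary: S a rule: less_induct)
  case less
  note fin = less.prems(1) and i0 = less.prems(2) and deg = less.prems(3)
    and NS = less.prems(4) and ai0 = less.prems(5) and dv = less.prems(6)
  show ?case
  proof (cases "\<exists>j1\<in>S - {i0}. \<exists>c. G j1 = (\<Sum>j\<in>S - {i0} - {j1}. smult (c j) (G j))")
    case True
    then obtain j1 c where j1: "j1 \<in> S" "j1 \<noteq> i0" and c: "G j1 = (\<Sum>j\<in>S - {i0} - {j1}. smult (c j) (G j))"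
      by blast
    define S' where "S' = S - {j1}"
    define c' where "c' j = (if j = i0 then 0 else c j)" for j
    define a' where "a' j = a j + a j1 * c' j" for j
    have fin': "finite S'" using fin by (simp add: S'_def)
    have i0': "i0 \<in> S'" using i0 j1 by (simp add: S'_def)
    have card': "card S' < card S" unfolding S'_def by (rule card_Diff1_less[OF fin j1(1)])
    have sc: "(\<Sum>j\<in>S - {i0} - {j1}. smult (c j) (G j)) = (\<Sum>j\<in>S'. smult (c' j) (G j))"
    proof -
      have "(\<Sum>j\<in>S'. smult (c' j) (G j)) = smult (c' i0) (G i0) + (\<Sum>j\<in>S' - {i0}. smult (c' j) (G j))"
        using fin' i0' by (simp add: sum.remove)
      also have "\<dots> = (\<Sum>j\<in>S - {i0} - {j1}. smult (c j) (G j))"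
        by (simp add: c'_def S'_def) (intro sum.cong, auto)
      finally show ?thesis by simp
    qed
    have Peq: "(\<Sum>j\<in>S. smult (a j) (G j)) = (\<Sum>j\<in>S'. smult (a' j) (G j))"
    proof -
      have "(\<Sum>j\<in>S. smult (a j) (G j)) = smult (a j1) (G j1) + (\<Sum>j\<in>S'. smult (a j) (G j))"
        using fin j1 by (simp add: sum.remove S'_def)
      also have "\<dots> = (\<Sum>j\<in>S'. smult (a j1 * c' j) (G j)) + (\<Sum>j\<in>S'. smult (a j) (G j))"
        by (simp add: c sc smult_sum2)
      also have "\<dots> = (\<Sum>j\<in>S'. smult (a' j) (G j))"
        by (simp add: a'_def smult_add_left sum.distrib)
      finally show ?thesis .
    qed
    have NS': "\<not> (\<exists>d. G i0 = (\<Sum>j\<in>S' - {i0}. smult (d j) (G j)))"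
    proof
      assume "\<exists>d. G i0 = (\<Sum>j\<in>S' - {i0}. smult (d j) (G j))"
      then obtain d where d: "G i0 = (\<Sum>j\<in>S' - {i0}. smult (d j) (G j))" by blast
      define d' where "d' = d(j1 := 0)"
      have "(\<Sum>j\<in>S - {i0}. smult (d' j) (G j)) = smult (d' j1) (G j1) + (\<Sum>j\<in>S - {i0} - {j1}. smult (d' j) (G j))"
        using fin j1 by (simp add: sum.remove)
      also have "\<dots> = (\<Sum>j\<in>S' - {i0}. smult (d j) (G j))"
        by (simp add: d'_def S'_def Diff_insert2[symmetric] insert_commute)
      finally have "G i0 = (\<Sum>j\<in>S - {i0}. smult (d' j) (G j))" using d by simp
      then show False using NS by blast
    qed
    have deg': "\<And>j. j \<in> S' \<Longrightarrow> \<alpha> j + \<beta> j < CHAR('a)" using deg by (simp add: S'_def)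
    have ai0': "a' i0 \<noteq> 0" using ai0 by (simp add: a'_def c'_def)
    have dv': "monom 1 n dvd (\<Sum>j\<in>S'. smult (a' j) (G j))" using dv Peq by simp
    have "n \<le> \<alpha> i0 + (card S' choose 2)"
      using less.hyps[of S' a'] card' fin' i0' deg' NS' ai0' dv' by blast
    also have "\<dots> \<le> \<alpha> i0 + (card S choose 2)" using choose2_mono[of "card S'" "card S"] card' by simp
    finally show ?thesis .
  next
    case False
    define m where "m = card S"
    obtain e where e: "bij_betw e {0..<m} S" using ex_bij_betw_nat_finite[OF fin] by (auto simp: m_def)
    define t0 where "t0 = inv_into {0..<m} e i0"
    have t0: "t0 < m" "e t0 = i0" using e i0 unfolding t0_def
      by (auto simp: bij_betw_def inv_into_into f_inv_into_f)
    define A where "A t = \<alpha> (e t)" for t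
    define B where "B t = \<beta> (e t)" for t
    have eS: "t < m \<Longrightarrow> e t \<in> S" for t using e by (auto simp: bij_betw_def)
    have indS: "\<forall>j\<in>S. d j = 0" if z: "(\<Sum>j\<in>S. smult (d j) (G j)) = 0" for d
    proof (rule ccontr)
      assume "\<not> (\<forall>j\<in>S. d j = 0)"
      then obtain j1 where j1: "j1 \<in> S" "d j1 \<noteq> 0" by blast
      show False
      proof (cases "d i0 = 0")
        case False
        have "G i0 = (\<Sum>i\<in>S - {i0}. smult (- d i / d i0) (G i))"
          by (rule solve_out[OF fin i0 False z])
        then have "\<exists>c. G i0 = (\<Sum>j\<in>S - {i0}. smult (c j) (G j))"
          by (rule exI[where x="\<lambda>i. - d i / d i0"])
        then show False using NS by blast
      next
        case True
        then have j1i0: "j1 \<noteq> i0" using j1 by auto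
        have z': "(\<Sum>j\<in>S - {i0}. smult (d j) (G j)) = 0"
          using z fin i0 True by (simp add: sum.remove)
        have "G j1 = (\<Sum>i\<in>S - {i0} - {j1}. smult (- d i / d j1) (G i))"
          by (rule solve_out[of "S - {i0}" j1 d G]) (use fin j1 j1i0 z' in auto)
        then have "\<exists>c. G j1 = (\<Sum>j\<in>S - {i0} - {j1}. smult (c j) (G j))"
          by (rule exI[where x="\<lambda>i. - d i / d j1"])
        then show False using \<open>\<not> (\<exists>j1\<in>S - {i0}. \<exists>c. G j1 = _)\<close> j1 j1i0 by blast
      qed
    qed
    have ind: "indep (\<lambda>t. gg (A t) (B t) :: 'a poly) m"
      unfolding indep_def
    proof (rule allI, rule impI)
      fix c assume z: "(\<Sum>t\<in>{0..<m}. smult (c t) (gg (A t) (B t))) = (0::'a poly)"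
      define d where "d j = c (inv_into {0..<m} e j)" for j
      have "(\<Sum>j\<in>S. smult (d j) (G j)) = (\<Sum>t\<in>{0..<m}. smult (d (e t)) (G (e t)))"
        by (rule sum.reindex_bij_betw[OF e, symmetric])
      also have "\<dots> = (\<Sum>t\<in>{0..<m}. smult (c t) (gg (A t) (B t)))"
        using e by (intro sum.cong refl) (auto simp: d_def G_def A_def B_def bij_betw_def inv_into_f_f)
      finally have "\<forall>j\<in>S. d j = 0" using indS z by simp
      then show "\<forall>t<m. c t = 0"
        using e eS by (auto simp: d_def bij_betw_def inv_into_f_f)
    qed
    have "(\<Sum>j\<in>S. smult (a j) (G j)) = (\<Sum>t\<in>{0..<m}. smult (a (e t)) (gg (A t) (B t)))"
      by (subst sum.reindex_bij_betw[OF e, symmetric]) (simp add: G_def A_def B_def)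
    then have dv': "monom 1 n dvd (\<Sum>t\<in>{0..<m}. smult (a (e t)) (gg (A t) (B t)))" using dv by simp
    have "n \<le> A t0 + (\<Sum>i\<in>{0..<m}. i)"
      by (rule coreA[OF _ ind t0(1) _ dv']) (use deg eS t0 ai0 in \<open>auto simp: A_def B_def\<close>)
    then show ?thesis by (simp add: A_def t0 sum_id_choose2 m_def)
  qed
qed






lemma mainS:
  fixes \<alpha> \<beta> :: "nat \<Rightarrow> nat" and a :: "nat \<Rightarrow> 'a::field"
  defines "G \<equiv> (\<lambda>j. gg (\<alpha> j) (\<beta> j) :: 'a poly)"
  assumes "finite S" "\<And>j. j \<in> S \<Longrightarrow> \<alpha> j + \<beta> j < CHAR('a)"
    "(\<Sum>j\<in>S. smult (a j) (G j)) \<noteq> 0"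
  shows "order 0 (\<Sum>j\<in>S. smult (a j) (G j)) \<le> Max ((\<lambda>j. \<alpha> j + (card {i\<in>S. j \<le> i} choose 2)) ` S)"
  using assms(2-)
proof (induction "card S" arbitrary: S a rule: less_induct)
  case less
  note fin = less.prems(1) and deg = less.prems(2) and Pnz = less.prems(3)
  define P where "P = (\<Sum>j\<in>S. smult (a j) (G j))"
  have Sne: "S \<noteq> {}" using Pnz by auto
  define j0 where "j0 = Min S"
  have j0: "j0 \<in> S" "\<And>j. j \<in> S \<Longrightarrow> j0 \<le> j" using fin Sne by (auto simp: j0_def)
  have finI: "finite ((\<lambda>j. \<alpha> j + (card {i\<in>S. j \<le> i} choose 2)) ` S)" using fin by simp
  show ?case
  proof (cases "a j0 = 0 \<or> (\<exists>c. G j0 = (\<Sum>j\<in>S - {j0}. smult (c j) (G j)))")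
    case False
    have "monom 1 (order 0 P) dvd P" using monom_1_dvd_iff[of P] Pnz by (simp add: P_def)
    then have "order 0 P \<le> \<alpha> j0 + (card S choose 2)"
      using lemmaA[of S j0 \<alpha> \<beta> a "order 0 P"] fin j0(1) deg False by (simp add: P_def G_def)
    also have "{i\<in>S. j0 \<le> i} = S" using j0 by auto
    then have "\<alpha> j0 + (card S choose 2) = \<alpha> j0 + (card {i\<in>S. j0 \<le> i} choose 2)" by simp
    also have "\<dots> \<le> Max ((\<lambda>j. \<alpha> j + (card {i\<in>S. j \<le> i} choose 2)) ` S)"
      using finI j0(1) by (intro Max_ge) auto
    finally show ?thesis by (simp add: P_def)
  next
    case True
    define S' where "S' = S - {j0}"
    obtain a' where Peq: "P = (\<Sum>j\<in>S'. smult (a' j) (G j))"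
    proof (cases "a j0 = 0")
      case True
      have "P = smult (a j0) (G j0) + (\<Sum>j\<in>S'. smult (a j) (G j))"
        using fin j0 by (simp add: P_def S'_def sum.remove)
      then show ?thesis using that True by simp
    next
      case False
      with True obtain c where c: "G j0 = (\<Sum>j\<in>S'. smult (c j) (G j))" by (auto simp: S'_def)
      have "P = smult (a j0) (G j0) + (\<Sum>j\<in>S'. smult (a j) (G j))"
        using fin j0 by (simp add: P_def S'_def sum.remove)
      also have "\<dots> = (\<Sum>j\<in>S'. smult (a j + a j0 * c j) (G j))"
        by (simp add: c smult_sum2 smult_add_left sum.distrib)
      finally show ?thesis by (rule that[where a'="\<lambda>j. a j + a j0 * c j"])
    qed
    have card': "card S' < card S" unfolding S'_def by (rule card_Diff1_less[OF fin j0(1)])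
    have fin': "finite S'" using fin by (simp add: S'_def)
    have deg': "\<And>j. j \<in> S' \<Longrightarrow> \<alpha> j + \<beta> j < CHAR('a)" using deg by (simp add: S'_def)
    have Pnz': "(\<Sum>j\<in>S'. smult (a' j) (G j)) \<noteq> 0" using Pnz Peq by (simp add: P_def)
    have IH: "order 0 (\<Sum>j\<in>S'. smult (a' j) (G j)) \<le> Max ((\<lambda>j. \<alpha> j + (card {i\<in>S'. j \<le> i} choose 2)) ` S')"
      using less.hyps[of S' a'] card' fin' deg' Pnz' by blast
    have S'ne: "S' \<noteq> {}" using Pnz' by auto
    have img: "(\<lambda>j. \<alpha> j + (card {i\<in>S'. j \<le> i} choose 2)) ` S' = (\<lambda>j. \<alpha> j + (card {i\<in>S. j \<le> i} choose 2)) ` S'"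
    proof (rule image_cong[OF refl])
      fix j assume j: "j \<in> S'"
      have "j0 < j" using j j0(2)[of j] by (auto simp: S'_def)
      then have "{i\<in>S'. j \<le> i} = {i\<in>S. j \<le> i}" by (auto simp: S'_def)
      then show "\<alpha> j + (card {i\<in>S'. j \<le> i} choose 2) = \<alpha> j + (card {i\<in>S. j \<le> i} choose 2)" by simp
    qed
    have "Max ((\<lambda>j. \<alpha> j + (card {i\<in>S. j \<le> i} choose 2)) ` S') \<le> Max ((\<lambda>j. \<alpha> j + (card {i\<in>S. j \<le> i} choose 2)) ` S)"
      using S'ne finI by (intro Max_mono) (auto simp: S'_def)
    then show ?thesis using IH img Peq by (simp add: P_def)
  qed
qed

theorem theorem5p2:
  fixes a :: "nat \<Rightarrow> 'a::field"
    and \<alpha> \<beta> :: "nat \<Rightarrow> nat"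
    and k :: nat
  assumes char_pos: "CHAR('a) > 0"
    and alpha_mono: "\<And>i j. 1 \<le> i \<Longrightarrow> i \<le> j \<Longrightarrow> j \<le> k \<Longrightarrow> \<alpha> i \<le> \<alpha> j"
    and char_big: "\<And>j. j \<in> {1..k} \<Longrightarrow> \<alpha> j + \<beta> j < CHAR('a)"
    and P_nz: "(\<Sum>j=1..k. smult (a j) (monom 1 (\<alpha> j) * [:1, 1:] ^ (\<beta> j))) \<noteq> 0"
  shows "val (\<Sum>j=1..k. smult (a j) (monom 1 (\<alpha> j) * [:1, 1:] ^ (\<beta> j)))
           \<le> Max ((\<lambda>j. \<alpha> j + ((k + 1 - j) choose 2)) ` {1..k})"
proof -
  define P where "P = (\<Sum>j=1..k. smult (a j) (monom 1 (\<alpha> j) * [:1, 1:] ^ (\<beta> j)))"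
  have PG: "P = (\<Sum>j\<in>{1..k}. smult (a j) (gg (\<alpha> j) (\<beta> j)))"
    by (simp add: P_def gg_def hX_def)
  have Pnz: "P \<noteq> 0" using P_nz by (simp add: P_def)
  have "val P = order 0 P"
    unfolding val_def
  proof (rule Greatest_equality)
    show "monom 1 (order 0 P) dvd P" using monom_1_dvd_iff[OF Pnz] by simp
    show "\<And>y. monom 1 y dvd P \<Longrightarrow> y \<le> order 0 P" using monom_1_dvd_iff[OF Pnz] by simp
  qed
  also have "\<dots> \<le> Max ((\<lambda>j. \<alpha> j + (card {i\<in>{1..k}. j \<le> i} choose 2)) ` {1..k})"
    unfolding PG by (rule mainS) (use char_big Pnz PG in auto)
  also have "(\<lambda>j. \<alpha> j + (card {i\<in>{1..k}. j \<le> i} choose 2)) ` {1..k} = (\<lambda>j. \<alpha> j + ((k + 1 - j) choose 2)) ` {1..k}"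
  proof (rule image_cong[OF refl])
    fix j assume j: "j \<in> {1..k}"
    have "{i\<in>{1..k}. j \<le> i} = {j..k}" using j by auto
    then show "\<alpha> j + (card {i\<in>{1..k}. j \<le> i} choose 2) = \<alpha> j + ((k + 1 - j) choose 2)" by simp
  qed
  finally show ?thesis by (simp add: P_def)
qed


end
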